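(* Let $d,J\ge1$. Let $F,G$ be complex-valued functions of $(m,N)$ where $m=(m_1,\dots,m_d)$ is a $d$-tuple of positive integers and $N$ a square-free positive integer. Let $A(a,m)$ be a complex-valued function and $\alpha(a,m)$ a $d$-tuple of positive integers, both defined for $J$-tuples $a$ and $d$-tuples $m$ of positive integers, and assume: (i) $A$ and $\alpha$ are multiplicative in the sense that if all entries of $(a,m)$ are supported on primes dividing $L_1$ and all entries of $(a',m')$ on primes dividing $L_2$ with $(L_1,L_2)=1$, then $A(aa',mm')=A(a,m)A(a',m')$ and $\alpha(aa',mm')=\alpha(a,m)\alpha(a',m')$ (componentwise products); (ii) for each prime $p$, if all entries of $(a,m)$ are powers of $p$ then all entries of $\alpha(a,m)$ are powers of $p$. Suppose that for every square-free $N$ and every $m$, \[ F(m,N)=\sum_{LM=N}\sum_{a\mid L^\infty}A(a,m_L)\,G\Big(\alpha(a,m_L)\frac{m}{m_L},M\Big), \] with all sums absolutely convergent. Then for every square-free $N$ and every $m$, \[ G(m,N)=\sum_{LM=N}\mu(L)\sum_{a\mid L^\infty}A(a,m_L)\,F\Big(\alpha(a,m_L)\frac{m}{m_L},M\Big). \]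
   Context: For a tuple $m=(m_1,\dots,m_d)$ and a positive integer $L$, $m_L$ denotes the tuple whose $i$-th entry is the largest divisor of $m_i$ all of whose prime factors divide $L$ (so $m_L\mid L^\infty$ and $(m/m_L,L)=1$ componentwise); products and quotients of tuples are componentwise. $a\mid L^\infty$ for a tuple $a=(a_1,\dots,a_J)$ of positive integers means each $a_i$ has all its prime factors dividing $L$. *)

theory Defs
  imports "HOL-Analysis.Analysis" "HOL-Computational_Algebra.Squarefree"
begin

definition supp_in :: "nat \<Rightarrow> nat \<Rightarrow> bool" where
  "supp_in L k \<longleftrightarrow> (\<forall>p. prime p \<longrightarrow> p dvd k \<longrightarrow> p dvd L)"

(* the L-part of k: largest divisor of k all of whose prime factors divide L (k > 0) *)
definition Lpart :: "nat \<Rightarrow> nat \<Rightarrow> nat" where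
  "Lpart L k = Max {e. e dvd k \<and> supp_in L e}"

definition tpart :: "nat \<Rightarrow> ('i \<Rightarrow> nat) \<Rightarrow> ('i \<Rightarrow> nat)" where
  "tpart L m = (\<lambda>i. Lpart L (m i))"

definition pos_tuple :: "('i \<Rightarrow> nat) \<Rightarrow> bool" where
  "pos_tuple a \<longleftrightarrow> (\<forall>i. 0 < a i)"

definition tdvd_inf :: "('i \<Rightarrow> nat) \<Rightarrow> nat \<Rightarrow> bool" where
  "tdvd_inf a L \<longleftrightarrow> pos_tuple a \<and> (\<forall>i. supp_in L (a i))"

definition all_powers_of :: "nat \<Rightarrow> ('i \<Rightarrow> nat) \<Rightarrow> bool" where
  "all_powers_of p a \<longleftrightarrow> (\<forall>i. \<exists>k. a i = p ^ k)"

definition mu :: "nat \<Rightarrow> int" where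
  "mu n = (if squarefree n then (-1) ^ card (prime_factors n) else 0)"

end

theory Submission
  imports Defs
begin


lemma infsum_finsum:
  fixes f :: "'i \<Rightarrow> 'a \<Rightarrow> complex"
  assumes "finite I" "\<And>i. i \<in> I \<Longrightarrow> f i summable_on A"
  shows "infsum (\<lambda>x. \<Sum>i\<in>I. f i x) A = (\<Sum>i\<in>I. infsum (f i) A)"
    and "(\<lambda>x. \<Sum>i\<in>I. f i x) summable_on A"
  using assms
proof (induction I rule: finite_induct)
  case empty
  { case 1 then show ?case by simp next case 2 then show ?case by simp }
next
  case (insert i I)
  { case 1 then show ?case using insert
      by (simp add: infsum_add summable_on_add)
  next case 2 then show ?case using insert by (simp add: summable_on_add) }
qed

lemma supp_in_1: "supp_in L 1" by (auto simp: supp_in_def)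

lemma supp_in_mult: "supp_in L x \<Longrightarrow> supp_in L y \<Longrightarrow> supp_in L (x*y)"
  by (auto simp: supp_in_def prime_dvd_mult_iff)

lemma supp_in_dvd: "supp_in L x \<Longrightarrow> y dvd x \<Longrightarrow> supp_in L y"
  by (auto simp: supp_in_def intro: dvd_trans)

lemma coprime_by_primes:
  assumes "\<And>p. prime p \<Longrightarrow> p dvd a \<Longrightarrow> p dvd b \<Longrightarrow> False"
  shows "coprime (a::nat) b"
proof (rule ccontr)
  assume "\<not> coprime a b"
  then have "gcd a b \<noteq> 1" by (simp add: coprime_iff_gcd_eq_1)
  then obtain p where "prime p" "p dvd gcd a b" using prime_factor_nat by blast
  then show False using assms by (simp add: gcd_greatest_iff) blast
qed

lemma coprime_primeD:
  assumes "coprime (a::nat) b" "prime p" "p dvd a" "p dvd b" shows False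
proof -
  have "is_unit p" using assms coprime_common_divisor by blast
  then show False using assms(2) not_prime_unit by blast
qed

lemma supp_in_coprime: "supp_in L e \<Longrightarrow> coprime f L \<Longrightarrow> coprime e f"
  unfolding supp_in_def by (rule coprime_by_primes) (meson coprime_primeD)

lemma supp_in_coprime': "supp_in L e \<Longrightarrow> coprime L L' \<Longrightarrow> coprime e L'"
  using supp_in_coprime[of L e L'] by (metis coprime_commute)

lemma supp_in_mono: "supp_in L e \<Longrightarrow> L dvd L2 \<Longrightarrow> supp_in L2 e"
  by (auto simp: supp_in_def intro: dvd_trans)

lemma decomp_exists:
  assumes "0 < k"
  shows "\<exists>e f. k = e * f \<and> supp_in L e \<and> coprime f L"
  using assms
proof (induction k rule: less_induct)
  case (less k)
  show ?case
  proof (cases "coprime k L")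
    case True
    have "k = 1 * k" by simp
    then show ?thesis using supp_in_1 True by blast
  next
    case False
    obtain p where p: "prime p" "p dvd k" "p dvd L"
    proof -
      have "gcd k L \<noteq> 1" using False by (simp add: coprime_iff_gcd_eq_1)
      then obtain p where "prime p" "p dvd gcd k L" using prime_factor_nat by blast
      then show ?thesis using that by (meson dvd_trans gcd_dvd1 gcd_dvd2)
    qed
    from p(2) obtain k' where k': "k = p * k'" by (rule dvdE)
    have "0 < k'" using less.prems k' by (metis gr0I mult_0_right)
    have "1 * k' < p * k'"
      by (rule mult_strict_right_mono) (use prime_gt_1_nat[OF p(1)] \<open>0 < k'\<close> in auto)
    then have "k' < k" using k' by simp
    then obtain e f where ef: "k' = e*f" "supp_in L e" "coprime f L"
      using less.IH \<open>0 < k'\<close> by blast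
    have "supp_in L p" unfolding supp_in_def
    proof (intro allI impI)
      fix q :: nat assume "prime q" "q dvd p"
      then have "q = p" using p(1) primes_dvd_imp_eq by blast
      then show "q dvd L" using p(3) by simp
    qed
    then have "supp_in L (p*e)" using ef(2) by (rule supp_in_mult)
    moreover have "k = (p*e)*f" using ef(1) k' by simp
    ultimately show ?thesis using ef(3) by blast
  qed
qed

lemma Lpart_unique:
  assumes "k = e * f" "0 < k" "supp_in L e" "coprime f L"
  shows "Lpart L k = e"
proof -
  have fin: "finite {e. e dvd k \<and> supp_in L e}"
    by (rule finite_subset[of _ "{d. d dvd k}"]) (use assms(2) in auto)
  have mem: "e \<in> {e. e dvd k \<and> supp_in L e}" using assms by auto
  have le: "e' \<le> e" if "e' \<in> {e. e dvd k \<and> supp_in L e}" for e'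
  proof -
    have "coprime e' f" using that assms supp_in_coprime by auto
    then have "e' dvd e" using that assms(1) by (metis coprime_dvd_mult_left_iff mem_Collect_eq)
    moreover have "0 < e" using assms by auto
    ultimately show ?thesis by (simp add: dvd_imp_le)
  qed
  show ?thesis unfolding Lpart_def
    by (rule Max_eqI[OF fin le mem])
qed

lemma Lpart_props:
  assumes "0 < k"
  shows "Lpart L k dvd k" "supp_in L (Lpart L k)" "coprime (k div Lpart L k) L" "0 < Lpart L k"
    "Lpart L k * (k div Lpart L k) = k"
proof -
  obtain e f where ef: "k = e*f" "supp_in L e" "coprime f L" using decomp_exists[OF assms] by blast
  have e: "Lpart L k = e" using Lpart_unique ef assms by blast
  have "0 < e" using ef assms by auto
  then show "Lpart L k dvd k" "supp_in L (Lpart L k)" "coprime (k div Lpart L k) L" "0 < Lpart L k"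
    "Lpart L k * (k div Lpart L k) = k" unfolding e using ef by auto
qed

lemma Lpart_mult:
  assumes "0 < x" "0 < y"
  shows "Lpart L (x*y) = Lpart L x * Lpart L y"
proof -
  obtain e f where ef: "x = e*f" "supp_in L e" "coprime f L" using decomp_exists[OF assms(1)] by blast
  obtain e' f' where ef': "y = e'*f'" "supp_in L e'" "coprime f' L" using decomp_exists[OF assms(2)] by blast
  have 1: "Lpart L x = e" "Lpart L y = e'" using Lpart_unique ef ef' assms by blast+
  have "Lpart L (x*y) = e*e'"
    by (rule Lpart_unique[of _ _ "f*f'"]) (use ef ef' assms supp_in_mult in auto)
  then show ?thesis using 1 by simp
qed

lemma Lpart_coprime: "0 < x \<Longrightarrow> coprime x L \<Longrightarrow> Lpart L x = 1"
  by (rule Lpart_unique[of _ _ x]) (auto simp: supp_in_def)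

lemma Lpart_supp: "0 < x \<Longrightarrow> supp_in L x \<Longrightarrow> Lpart L x = x"
  by (rule Lpart_unique[of _ _ 1]) auto

lemma Lpart_prod:
  assumes "coprime L L'" "0 < k"
  shows "Lpart (L*L') k = Lpart L k * Lpart L' k"
proof -
  obtain e f where ef: "k = e*f" "supp_in L e" "coprime f L" using decomp_exists[OF assms(2)] by blast
  have f0: "0 < f" "0 < e" using ef assms by auto
  obtain e' f' where ef': "f = e'*f'" "supp_in L' e'" "coprime f' L'" using decomp_exists[OF f0(1)] by blast
  have f'0: "0 < f'" "0 < e'" using ef' f0 by auto
  have 1: "Lpart L k = e" using Lpart_unique ef assms by blast
  have "Lpart L' k = Lpart L' e * Lpart L' f" using ef f0 Lpart_mult by blast
  also have "Lpart L' e = 1" using Lpart_coprime f0 supp_in_coprime'[OF ef(2) assms(1)] by blast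
  also have "Lpart L' f = e'" using Lpart_unique ef' f0 by blast
  finally have 2: "Lpart L' k = e'" by simp
  have "supp_in (L*L') (e*e')" by (intro supp_in_mult supp_in_mono[OF ef(2)] supp_in_mono[OF ef'(2)]) auto
  moreover have "coprime f' (L*L')" using ef ef' by (metis coprime_mult_left_iff coprime_mult_right_iff)
  ultimately have "Lpart (L*L') k = e*e'"
    by (intro Lpart_unique[of _ _ f']) (use ef ef' assms in auto)
  then show ?thesis using 1 2 by simp
qed

lemma Lpart_one: "0 < x \<Longrightarrow> Lpart 1 x = 1"
  using Lpart_coprime by simp



lemma supp_in_prime_power:
  assumes "prime p" "0 < x" "supp_in p x"
  shows "\<exists>k. x = p ^ k"
  using assms(2,3)
proof (induction x rule: less_induct)
  case (less x)
  show ?case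
  proof (cases "x = 1")
    case True then show ?thesis by (intro exI[of _ 0]) simp
  next
    case False
    then obtain q where q: "prime q" "q dvd x" using prime_factor_nat by blast
    then have "q dvd p" using less.prems unfolding supp_in_def by blast
    then have "q = p" using q(1) assms(1) primes_dvd_imp_eq by blast
    from q(2) obtain x' where x': "x = p * x'" unfolding \<open>q = p\<close> by (rule dvdE)
    have "0 < x'" using less.prems x' by (metis gr0I mult_0_right)
    have "1 * x' < p * x'"
      by (rule mult_strict_right_mono) (use prime_gt_1_nat[OF assms(1)] \<open>0 < x'\<close> in auto)
    then have "x' < x" using x' by simp
    moreover have "supp_in p x'" using less.prems(2) x' supp_in_dvd by (metis dvd_triv_right)
    ultimately obtain k where "x' = p ^ k" using less.IH \<open>0 < x'\<close> by blast
    then have "x = p ^ Suc k" using x' by simp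
    then show ?thesis by blast
  qed
qed

lemma supp_in_power: "prime p \<Longrightarrow> supp_in p (p ^ k)"
  unfolding supp_in_def using prime_dvd_power by blast

lemma supp_in_one_eq: "0 < x \<Longrightarrow> supp_in 1 x \<Longrightarrow> x = 1"
  using Lpart_supp[of x 1] Lpart_one[of x] by simp

lemma squarefree_coprime:
  assumes "squarefree ((a::nat) * b)" shows "coprime a b"
proof -
  have "gcd a b * gcd a b dvd a * b" by (intro mult_dvd_mono) auto
  then have "is_unit (gcd a b)" using assms unfolding squarefree_def power2_eq_square by blast
  then show ?thesis by (simp add: is_unit_gcd coprime_iff_gcd_eq_1)
qed

lemma tpart_tdvd: "pos_tuple m \<Longrightarrow> tdvd_inf (tpart L m) L"
  unfolding tdvd_inf_def pos_tuple_def tpart_def using Lpart_props(2,4) by simp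

lemma tdvd_inf_one: "tdvd_inf (\<lambda>_. 1) 1"
  unfolding tdvd_inf_def pos_tuple_def by (simp add: supp_in_def)

lemma tdvd_inf_one_eq: "tdvd_inf a 1 \<longleftrightarrow> a = (\<lambda>_. 1)"
proof
  assume "tdvd_inf a 1"
  then show "a = (\<lambda>_. 1)" unfolding tdvd_inf_def pos_tuple_def using supp_in_one_eq by blast
next
  assume "a = (\<lambda>_. 1)" then show "tdvd_inf a 1" using tdvd_inf_one by simp
qed

locale mctx =
  fixes \<alpha> :: "('j \<Rightarrow> nat) \<Rightarrow> ('d \<Rightarrow> nat) \<Rightarrow> ('d \<Rightarrow> nat)"
  assumes alpha_pos: "\<And>a m. pos_tuple a \<Longrightarrow> pos_tuple m \<Longrightarrow> pos_tuple (\<alpha> a m)"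
    and alpha_mult: "\<And>a m a' m' L1 L2. 0 < L1 \<Longrightarrow> 0 < L2 \<Longrightarrow> coprime L1 L2 \<Longrightarrow>
         tdvd_inf a L1 \<Longrightarrow> tdvd_inf m L1 \<Longrightarrow> tdvd_inf a' L2 \<Longrightarrow> tdvd_inf m' L2 \<Longrightarrow>
         \<alpha> (\<lambda>j. a j * a' j) (\<lambda>i. m i * m' i) = (\<lambda>i. \<alpha> a m i * \<alpha> a' m' i)"
    and alpha_local: "\<And>p a m. prime p \<Longrightarrow> all_powers_of p a \<Longrightarrow> all_powers_of p m \<Longrightarrow>
         all_powers_of p (\<alpha> a m)"
begin

lemma alpha_one:
  shows "\<alpha> (\<lambda>_. 1) (\<lambda>_. 1) = (\<lambda>_. 1)"
proof
  fix i
  have "\<alpha> (\<lambda>j. 1 * 1) (\<lambda>i. 1 * 1) = (\<lambda>i. \<alpha> (\<lambda>_. 1) (\<lambda>_. 1) i * \<alpha> (\<lambda>_. 1) (\<lambda>_. 1) i)"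
    apply (rule alpha_mult[of 1 1])
    apply simp_all[3]
    apply (rule tdvd_inf_one)+
    done
  then have "\<alpha> (\<lambda>_. 1) (\<lambda>_. 1) i = \<alpha> (\<lambda>_. 1) (\<lambda>_. 1) i * \<alpha> (\<lambda>_. 1) (\<lambda>_. 1) i"
    by (metis mult_1)
  moreover have "0 < \<alpha> (\<lambda>_. 1) (\<lambda>_. 1) i"
    using alpha_pos[of "\<lambda>_. 1" "\<lambda>_. 1"] by (auto simp: pos_tuple_def)
  ultimately show "\<alpha> (\<lambda>_. 1) (\<lambda>_. 1) i = 1" by simp
qed

lemma alpha_supp:
  shows "0 < L \<Longrightarrow> tdvd_inf a L \<Longrightarrow> tdvd_inf m L \<Longrightarrow> supp_in L (\<alpha> a m i)"
proof (induction L arbitrary: a m rule: less_induct)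
  case (less L)
  show ?case
  proof (cases "L = 1")
    case True
    then have "a = (\<lambda>_. 1)" "m = (\<lambda>_. 1)" using less.prems tdvd_inf_one_eq by blast+
    then show ?thesis using alpha_one by (simp add: supp_in_def)
  next
    case False
    then obtain p where p: "prime p" "p dvd L" using prime_factor_nat by blast
    obtain e f where ef: "L = e * f" "supp_in p e" "coprime f p"
      using decomp_exists[OF less.prems(1)] by blast
    have e0: "0 < e" "0 < f" using ef less.prems(1) by auto
    have "\<not> p dvd f" using coprime_primeD[OF ef(3) p(1)] by auto
    then have "p dvd e" using p ef(1) by (simp add: prime_dvd_mult_iff)
    then have "p \<le> e" using e0 by (simp add: dvd_imp_le)
    then have "1 * f < e * f" using prime_gt_1_nat[OF p(1)] e0 by (intro mult_strict_right_mono) auto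
    then have fL: "f < L" using ef by simp
    have cop: "coprime e f" using supp_in_coprime[OF ef(2,3)] .
    have se: "supp_in p x" if "supp_in e x" for x
      using that ef(2) unfolding supp_in_def by blast
    have split: "x = Lpart e x * Lpart f x" if "0 < x" "supp_in L x" for x
      using Lpart_prod[OF cop that(1)] Lpart_supp[OF that] ef(1) by simp
    define a1 where "a1 = tpart e a"
    define a2 where "a2 = tpart f a"
    define m1 where "m1 = tpart e m"
    define m2 where "m2 = tpart f m"
    have pa: "pos_tuple a" "pos_tuple m" using less.prems unfolding tdvd_inf_def by auto
    have t: "tdvd_inf a1 e" "tdvd_inf a2 f" "tdvd_inf m1 e" "tdvd_inf m2 f"
      unfolding a1_def a2_def m1_def m2_def using tpart_tdvd pa by blast+
    have aeq: "a = (\<lambda>j. a1 j * a2 j)"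
    proof
      fix j
      have "0 < a j" "supp_in L (a j)" using less.prems(2) unfolding tdvd_inf_def pos_tuple_def by auto
      then show "a j = a1 j * a2 j" unfolding a1_def a2_def tpart_def by (rule split)
    qed
    have meq: "m = (\<lambda>j. m1 j * m2 j)"
    proof
      fix j
      have "0 < m j" "supp_in L (m j)" using less.prems(3) unfolding tdvd_inf_def pos_tuple_def by auto
      then show "m j = m1 j * m2 j" unfolding m1_def m2_def tpart_def by (rule split)
    qed
    have al: "\<alpha> a m i = \<alpha> a1 m1 i * \<alpha> a2 m2 i"
      using alpha_mult[OF e0 cop t(1,3,2,4)] aeq meq by metis
    have pw: "all_powers_of p x" if "tdvd_inf x e" for x :: "'k \<Rightarrow> nat"
      unfolding all_powers_of_def
    proof
      fix j
      have "0 < x j" "supp_in e (x j)" using that unfolding tdvd_inf_def pos_tuple_def by auto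
      then show "\<exists>k. x j = p ^ k" using supp_in_prime_power[OF p(1)] se by blast
    qed
    obtain k where "\<alpha> a1 m1 i = p ^ k"
      using alpha_local[OF p(1) pw[OF t(1)] pw[OF t(3)]] unfolding all_powers_of_def by blast
    then have s1: "supp_in L (\<alpha> a1 m1 i)"
      using supp_in_power[OF p(1)] supp_in_mono p(2) by metis
    have "supp_in f (\<alpha> a2 m2 i)" using less.IH[OF fL e0(2) t(2,4)] .
    then have s2: "supp_in L (\<alpha> a2 m2 i)" using supp_in_mono ef(1) by (metis dvd_triv_right)
    show ?thesis unfolding al using s1 s2 by (rule supp_in_mult)
  qed
qed

end



lemma mu_sum:
  assumes "squarefree K"
  shows "(\<Sum>L | L dvd K. mu L) = (if K = 1 then 1 else 0)"
  using assms
proof (induction K rule: less_induct)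
  case (less K)
  have K0: "K \<noteq> 0" using less.prems by (cases "K = 0") auto
  show ?case
  proof (cases "K = 1")
    case True
    have "{L. L dvd (1::nat)} = {1}" by auto
    then show ?thesis using True by (simp add: mu_def)
  next
    case False
    then obtain p where p: "prime p" "p dvd K" using prime_factor_nat by blast
    from p(2) obtain K' where K': "K = p * K'" by (rule dvdE)
    have K'0: "0 < K'" using K0 K' by (metis gr0I mult_0_right)
    have "1 * K' < p * K'"
      by (rule mult_strict_right_mono) (use prime_gt_1_nat[OF p(1)] K'0 in auto)
    then have lt: "K' < K" using K' by simp
    have sqK': "squarefree K'" using less.prems K' squarefree_mono by (metis dvd_triv_right)
    have cop: "coprime p K'" using squarefree_coprime less.prems K' by simp
    have npK': "\<not> p dvd K'" using coprime_primeD[OF cop p(1)] by auto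
    have p0: "0 < p" using p(1) prime_gt_0_nat by blast
    define D where "D = {L. L dvd K'}"
    have finD: "finite D" unfolding D_def using K'0 by simp
    have split: "{L. L dvd K} = D \<union> (\<lambda>L. p * L) ` D"
    proof (intro equalityI subsetI)
      fix L assume "L \<in> {L. L dvd K}"
      then have L: "L dvd p * K'" using K' by simp
      show "L \<in> D \<union> (\<lambda>L. p * L) ` D"
      proof (cases "p dvd L")
        case True
        then obtain L'' where L'': "L = p * L''" by (rule dvdE)
        then have "L'' dvd K'" using L p0 by simp
        then show ?thesis unfolding D_def using L'' by blast
      next
        case False
        then have "coprime L p" using prime_imp_coprime[OF p(1)] by (simp add: coprime_commute)
        then have "L dvd K'" using L by (simp add: coprime_dvd_mult_right_iff)
        then show ?thesis unfolding D_def by blast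
      qed
    next
      fix L assume "L \<in> D \<union> (\<lambda>L. p * L) ` D"
      then show "L \<in> {L. L dvd K}" unfolding D_def K' by auto
    qed
    have disj: "D \<inter> (\<lambda>L. p * L) ` D = {}"
      unfolding D_def using npK' by (auto intro: dvd_trans)
    have inj: "inj_on (\<lambda>L. p * L) D" using p0 by (auto simp: inj_on_def)
    have neg: "mu (p * L) = - mu L" if "L \<in> D" for L
    proof -
      have LK': "L dvd K'" using that D_def by simp
      have L0: "L \<noteq> 0" using LK' K'0 by auto
      have "p * L dvd K" using LK' K' by simp
      then have sq1: "squarefree (p * L)" using less.prems squarefree_mono by blast
      have sq2: "squarefree L" using LK' sqK' squarefree_mono by blast
      have npL: "p \<notin> prime_factors L" using npK' LK' by (auto intro: dvd_trans)
      have "prime_factors (p * L) = prime_factors p \<union> prime_factors L"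
        using p0 L0 by (intro prime_factors_product) auto
      also have "prime_factors p = {p}" using p(1) by (rule prime_prime_factors)
      finally have "prime_factors (p * L) = insert p (prime_factors L)" by simp
      then have "card (prime_factors (p * L)) = Suc (card (prime_factors L))"
        using npL by simp
      then show ?thesis using sq1 sq2 by (simp add: mu_def)
    qed
    have "(\<Sum>L | L dvd K. mu L) = sum mu D + sum mu ((\<lambda>L. p * L) ` D)"
      unfolding split by (rule sum.union_disjoint) (use finD disj in auto)
    also have "sum mu ((\<lambda>L. p * L) ` D) = (\<Sum>L\<in>D. mu (p * L))"
      by (subst sum.reindex[OF inj]) (simp add: o_def)
    also have "\<dots> = (\<Sum>L\<in>D. - mu L)" using neg by (rule sum.cong[OF refl])
    finally show ?thesis using False by (simp add: sum_negf)
  qed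
qed



context mctx begin

lemma pair_component:
  assumes L: "0 < L" "0 < L'" "coprime L L'" and a: "tdvd_inf a L" and m: "pos_tuple m"
  defines "n \<equiv> (\<lambda>i. \<alpha> a (tpart L m) i * (m i div tpart L m i))"
  shows "tpart L' n = tpart L' m"
    and "\<And>i. n i div tpart L' n i = \<alpha> a (tpart L m) i * (m i div tpart (L*L') m i)"
    and "pos_tuple n"
proof -
  have tL: "tdvd_inf (tpart L m) L" using tpart_tdvd m by blast
  have ap: "pos_tuple (\<alpha> a (tpart L m))" using alpha_pos a tL unfolding tdvd_inf_def by blast
  have key: "tpart L' n i = tpart L' m i \<and>
        n i div tpart L' n i = \<alpha> a (tpart L m) i * (m i div tpart (L*L') m i) \<and> 0 < n i" for i
  proof -
    define x where "x = m i"
    define e where "e = Lpart L x"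
    define r where "r = x div e"
    define al where "al = \<alpha> a (tpart L m) i"
    have x0: "0 < x" using m unfolding pos_tuple_def x_def by blast
    have al0: "0 < al" using ap unfolding pos_tuple_def al_def by blast
    have alsupp: "supp_in L al" unfolding al_def using alpha_supp[OF L(1) a tL] .
    have ex: "e * r = x" "0 < e" "supp_in L e" using Lpart_props[OF x0] unfolding e_def r_def by auto
    have r0: "0 < r" using ex x0 by (metis gr0I mult_0_right)
    have ni: "n i = al * r" unfolding n_def al_def r_def e_def x_def tpart_def by simp
    have l1: "Lpart L' al = 1" using Lpart_coprime[OF al0 supp_in_coprime'[OF alsupp L(3)]] .
    have l2: "Lpart L' e = 1" using Lpart_coprime[OF ex(2) supp_in_coprime'[OF ex(3) L(3)]] .
    have A1: "Lpart L' (n i) = Lpart L' r" unfolding ni using Lpart_mult[OF al0 r0] l1 by simp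
    have A2: "Lpart L' x = Lpart L' r" using Lpart_mult[OF ex(2) r0] l2 ex(1) by simp
    have dv: "Lpart L' r dvd r" using Lpart_props(1)[OF r0] .
    have "n i div Lpart L' (n i) = (al * r) div Lpart L' r" using A1 ni by simp
    also have "\<dots> = al * (r div Lpart L' r)" using dv by (simp add: div_mult_swap)
    also have "r div Lpart L' r = x div (e * Lpart L' r)"
      unfolding r_def by (simp add: div_mult2_eq)
    also have "e * Lpart L' r = Lpart (L*L') x"
      unfolding e_def using Lpart_prod[OF L(3) x0] A2 by simp
    finally show ?thesis using A1 A2 ni al0 r0
      unfolding tpart_def[of L' n] tpart_def[of L' m] tpart_def[of "L*L'" m] x_def al_def by simp
  qed
  show "tpart L' n = tpart L' m" using key by blast
  show "\<And>i. n i div tpart L' n i = \<alpha> a (tpart L m) i * (m i div tpart (L*L') m i)"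
    using key by blast
  show "pos_tuple n" unfolding pos_tuple_def using key by blast
qed

lemma tpart_prod:
  assumes "coprime L L'" "pos_tuple m"
  shows "tpart (L*L') m = (\<lambda>i. tpart L m i * tpart L' m i)"
  using Lpart_prod[OF assms(1)] assms(2) unfolding tpart_def pos_tuple_def by auto

lemma pair_bij:
  assumes L: "0 < L" "0 < L'" "coprime L L'"
  shows "bij_betw (\<lambda>(a,b). (\<lambda>j. a j * b j)) ({a::'k\<Rightarrow>nat. tdvd_inf a L} \<times> {b::'k\<Rightarrow>nat. tdvd_inf b L'})
           {c::'k \<Rightarrow> nat. tdvd_inf c (L*L')}"
proof (rule bij_betw_byWitness[where f'="\<lambda>c. (tpart L c, tpart L' c)"])
  have c1: "Lpart L (x * y) = x" "Lpart L' (x * y) = y"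
    if "0 < x" "0 < y" "supp_in L x" "supp_in L' y" for x y
  proof -
    show "Lpart L (x * y) = x"
      by (rule Lpart_unique[of _ _ y]) (use that supp_in_coprime'[OF that(4)] L(3) in \<open>auto simp: coprime_commute\<close>)
    show "Lpart L' (x * y) = y"
      by (rule Lpart_unique[of _ y x]) (use that supp_in_coprime'[OF that(3) L(3)] in auto)
  qed
  show "\<forall>p\<in>{a::'k\<Rightarrow>nat. tdvd_inf a L} \<times> {b::'k\<Rightarrow>nat. tdvd_inf b L'}.
          (tpart L ((\<lambda>(a, b) j. a j * b j) p), tpart L' ((\<lambda>(a, b) j. a j * b j) p)) = p"
  proof
    fix p assume "p \<in> {a::'k\<Rightarrow>nat. tdvd_inf a L} \<times> {b::'k\<Rightarrow>nat. tdvd_inf b L'}"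
    then obtain a b :: "'k \<Rightarrow> nat" where p: "p = (a,b)" "tdvd_inf a L" "tdvd_inf b L'" by blast
    have "tpart L (\<lambda>j. a j * b j) = a" "tpart L' (\<lambda>j. a j * b j) = b"
      using c1 p unfolding tpart_def tdvd_inf_def pos_tuple_def by auto
    then show "(tpart L ((\<lambda>(a, b) j. a j * b j) p), tpart L' ((\<lambda>(a, b) j. a j * b j) p)) = p"
      using p by simp
  qed
  show "\<forall>c\<in>{c::'k\<Rightarrow>nat. tdvd_inf c (L*L')}. (\<lambda>(a, b) j. a j * b j) (tpart L c, tpart L' c) = c"
  proof
    fix c :: "'k \<Rightarrow> nat" assume "c \<in> {c. tdvd_inf c (L*L')}"
    then have c: "\<And>j. 0 < c j" "\<And>j. supp_in (L*L') (c j)"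
      unfolding tdvd_inf_def pos_tuple_def by auto
    have "tpart L c j * tpart L' c j = c j" for j
      unfolding tpart_def using Lpart_prod[OF L(3) c(1)] Lpart_supp[OF c(1) c(2)] by simp
    then show "(\<lambda>(a, b) j. a j * b j) (tpart L c, tpart L' c) = c" by auto
  qed
  show "(\<lambda>(a, b) j. a j * b j) ` ({a::'k\<Rightarrow>nat. tdvd_inf a L} \<times> {b::'k\<Rightarrow>nat. tdvd_inf b L'}) \<subseteq> {c. tdvd_inf c (L*L')}"
  proof
    fix c assume "c \<in> (\<lambda>(a, b) j. a j * b j) ` ({a::'k\<Rightarrow>nat. tdvd_inf a L} \<times> {b::'k\<Rightarrow>nat. tdvd_inf b L'})"
    then obtain a b :: "'k \<Rightarrow> nat" where c: "c = (\<lambda>j. a j * b j)" "tdvd_inf a L" "tdvd_inf b L'" by auto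
    have "supp_in (L*L') (a j * b j)" for j
      using c(2,3) unfolding tdvd_inf_def
      by (intro supp_in_mult) (auto intro: supp_in_mono)
    then show "c \<in> {c. tdvd_inf c (L*L')}" using c unfolding tdvd_inf_def pos_tuple_def by auto
  qed
  show "(\<lambda>c. (tpart L c, tpart L' c)) ` {c. tdvd_inf c (L*L')} \<subseteq> {a::'k\<Rightarrow>nat. tdvd_inf a L} \<times> {b::'k\<Rightarrow>nat. tdvd_inf b L'}"
    using tpart_tdvd unfolding tdvd_inf_def by blast
qed

end



locale main = mctx \<alpha> for \<alpha> :: "('j \<Rightarrow> nat) \<Rightarrow> ('d \<Rightarrow> nat) \<Rightarrow> ('d \<Rightarrow> nat)" +
  fixes F G :: "('d \<Rightarrow> nat) \<Rightarrow> nat \<Rightarrow> complex"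
    and A :: "('j \<Rightarrow> nat) \<Rightarrow> ('d \<Rightarrow> nat) \<Rightarrow> complex"
    and N :: nat and m :: "'d \<Rightarrow> nat"
  assumes A_one: "A (\<lambda>_. 1) (\<lambda>_. 1) = 1"
    and A_mult: "\<And>a m a' m' L1 L2. 0 < L1 \<Longrightarrow> 0 < L2 \<Longrightarrow> coprime L1 L2 \<Longrightarrow>
         tdvd_inf a L1 \<Longrightarrow> tdvd_inf m L1 \<Longrightarrow> tdvd_inf a' L2 \<Longrightarrow> tdvd_inf m' L2 \<Longrightarrow>
         A (\<lambda>j. a j * a' j) (\<lambda>i. m i * m' i) = A a m * A a' m'"
    and conv: "\<And>N m L. squarefree N \<Longrightarrow> pos_tuple m \<Longrightarrow> L dvd N \<Longrightarrow>
         (\<lambda>a. norm (A a (tpart L m) * G (\<lambda>i. \<alpha> a (tpart L m) i * (m i div tpart L m i)) (N div L)))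
           summable_on {a. tdvd_inf a L}"
    and expand: "\<And>N m. squarefree N \<Longrightarrow> pos_tuple m \<Longrightarrow>
         F m N = (\<Sum>L | L dvd N.
           infsum (\<lambda>a. A a (tpart L m) * G (\<lambda>i. \<alpha> a (tpart L m) i * (m i div tpart L m i)) (N div L))
             {a. tdvd_inf a L})"
    and N: "squarefree N"
    and m: "pos_tuple m"
begin

definition hh :: "nat \<Rightarrow> ('j \<Rightarrow> nat) \<Rightarrow> complex" where
  "hh K c = A c (tpart K m) * G (\<lambda>i. \<alpha> c (tpart K m) i * (m i div tpart K m i)) (N div K)"

definition TT :: "nat \<Rightarrow> complex" where
  "TT K = infsum (hh K) {c. tdvd_inf c K}"

lemma N0: "0 < N" using N by (cases "N = 0") auto

lemma hh_summable: "K dvd N \<Longrightarrow> hh K summable_on {c. tdvd_inf c K}"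
  unfolding hh_def by (rule abs_summable_summable) (rule conv[OF N m])

lemma step:
  assumes L: "L dvd N"
  shows "infsum (\<lambda>a. A a (tpart L m) * F (\<lambda>i. \<alpha> a (tpart L m) i * (m i div tpart L m i)) (N div L))
           {a. tdvd_inf a L} = (\<Sum>L' | L' dvd N div L. TT (L*L'))"
proof -
  have L0: "0 < L" using L N0 by (cases "L = 0") auto
  have NL: "N = L * (N div L)" using L by simp
  have sqNL: "squarefree (N div L)" using N NL squarefree_mono by (metis dvd_triv_right)
  define nn where "nn a = (\<lambda>i. \<alpha> a (tpart L m) i * (m i div tpart L m i))" for a
  define D' where "D' = {L'. L' dvd N div L}"
  have finD': "finite D'" unfolding D'_def using NL N0 by (cases "N div L = 0") auto
  define g where "g L' a b = A a (tpart L m) * (A b (tpart L' (nn a)) *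
      G (\<lambda>i. \<alpha> b (tpart L' (nn a)) i * (nn a i div tpart L' (nn a) i)) (N div L div L'))" for L' a b
  have props: "0 < L' \<and> coprime L L' \<and> L * L' dvd N" if "L' \<in> D'" for L'
  proof -
    have "L * L' dvd L * (N div L)" using that unfolding D'_def by simp
    then have d: "L * L' dvd N" using NL by simp
    then have "squarefree (L * L')" using N squarefree_mono by blast
    then have "coprime L L'" by (rule squarefree_coprime)
    moreover have "0 < L'" using d N0 by (cases "L' = 0") auto
    ultimately show ?thesis using d by blast
  qed
  have geq: "g L' a b = hh (L*L') (\<lambda>j. a j * b j)"
    if L': "L' \<in> D'" and a: "tdvd_inf a L" and b: "tdvd_inf b L'" for L' a b
  proof -
    have L'0: "0 < L'" and cop: "coprime L L'" using props[OF L'] by auto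
    note pc = pair_component[OF L0 L'0 cop a m, folded nn_def]
    have tL: "tdvd_inf (tpart L m) L" and tL': "tdvd_inf (tpart L' m) L'" using tpart_tdvd m by blast+
    have tp: "tpart (L*L') m = (\<lambda>i. tpart L m i * tpart L' m i)" using tpart_prod[OF cop m] .
    have Aeq: "A (\<lambda>j. a j * b j) (tpart (L*L') m) = A a (tpart L m) * A b (tpart L' m)"
      unfolding tp by (rule A_mult[OF L0 L'0 cop a tL b tL'])
    have aeq: "\<alpha> (\<lambda>j. a j * b j) (tpart (L*L') m) = (\<lambda>i. \<alpha> a (tpart L m) i * \<alpha> b (tpart L' m) i)"
      unfolding tp by (rule alpha_mult[OF L0 L'0 cop a tL b tL'])
    have div: "N div L div L' = N div (L*L')" by (simp add: div_mult2_eq)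
    have pc2: "\<And>i. nn a i div tpart L' m i = \<alpha> a (tpart L m) i * (m i div tpart (L*L') m i)"
      using pc(2) unfolding pc(1) by (simp add: nn_def)
    show ?thesis unfolding g_def hh_def pc(1) pc2 Aeq aeq div
      by (simp add: ac_simps)
  qed
  have inner: "infsum (\<lambda>a. infsum (g L' a) {b. tdvd_inf b L'}) {a. tdvd_inf a L} = TT (L*L')
      \<and> (\<lambda>a. infsum (g L' a) {b. tdvd_inf b L'}) summable_on {a. tdvd_inf a L}"
    if L': "L' \<in> D'" for L'
  proof -
    have L'0: "0 < L'" and cop: "coprime L L'" and dv: "L * L' dvd N" using props[OF L'] by auto
    have bij: "bij_betw (\<lambda>(a,b). (\<lambda>j. a j * b j)) ({a::'j\<Rightarrow>nat. tdvd_inf a L} \<times> {b::'j\<Rightarrow>nat. tdvd_inf b L'})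
           {c::'j \<Rightarrow> nat. tdvd_inf c (L*L')}" by (rule pair_bij[OF L0 L'0 cop])
    have s1: "(\<lambda>p. hh (L*L') ((\<lambda>(a,b). (\<lambda>j. a j * b j)) p)) summable_on
        ({a::'j\<Rightarrow>nat. tdvd_inf a L} \<times> {b::'j\<Rightarrow>nat. tdvd_inf b L'})"
      by (rule summable_on_reindex_bij_betw[OF bij, THEN iffD2]) (rule hh_summable[OF dv])
    have cg: "(\<lambda>(a,b). g L' a b) p = hh (L*L') ((\<lambda>(a,b). (\<lambda>j. a j * b j)) p)"
      if hp: "p \<in> {a::'j\<Rightarrow>nat. tdvd_inf a L} \<times> {b::'j\<Rightarrow>nat. tdvd_inf b L'}" for p
    proof -
      obtain a b where p: "p = (a,b)" "tdvd_inf a L" "tdvd_inf b L'" using hp by auto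
      show ?thesis unfolding p(1) using geq[OF L' p(2,3)] by simp
    qed
    have s2: "(\<lambda>(a,b). g L' a b) summable_on ({a::'j\<Rightarrow>nat. tdvd_inf a L} \<times> {b::'j\<Rightarrow>nat. tdvd_inf b L'})"
      by (rule iffD2[OF summable_on_cong[OF cg] s1])
    have "infsum (\<lambda>a. infsum (g L' a) {b. tdvd_inf b L'}) {a. tdvd_inf a L}
        = infsum (\<lambda>(a,b). g L' a b) ({a::'j\<Rightarrow>nat. tdvd_inf a L} \<times> {b::'j\<Rightarrow>nat. tdvd_inf b L'})"
      using infsum_Sigma'_banach[OF s2] .
    also have "\<dots> = infsum (\<lambda>p. hh (L*L') ((\<lambda>(a,b). (\<lambda>j. a j * b j)) p))
        ({a::'j\<Rightarrow>nat. tdvd_inf a L} \<times> {b::'j\<Rightarrow>nat. tdvd_inf b L'})"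
      using infsum_cong[OF cg] .
    also have "\<dots> = TT (L*L')" unfolding TT_def by (rule infsum_reindex_bij_betw[OF bij])
    finally show ?thesis using summable_on_Sigma_banach[OF s2] by blast
  qed
  have "infsum (\<lambda>a. A a (tpart L m) * F (nn a) (N div L)) {a. tdvd_inf a L}
      = infsum (\<lambda>a. \<Sum>L'\<in>D'. infsum (g L' a) {b. tdvd_inf b L'}) {a. tdvd_inf a L}"
  proof (rule infsum_cong)
    fix a :: "'j \<Rightarrow> nat" assume "a \<in> {a. tdvd_inf a L}"
    then have a: "tdvd_inf a L" by simp
    have "pos_tuple (nn a)"
      unfolding nn_def using pair_component(3)[OF L0 _ _ a m, of 1] by simp
    then have "F (nn a) (N div L) = (\<Sum>L'\<in>D'. infsum (\<lambda>b. A b (tpart L' (nn a)) *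
      G (\<lambda>i. \<alpha> b (tpart L' (nn a)) i * (nn a i div tpart L' (nn a) i)) (N div L div L')) {b. tdvd_inf b L'})"
      unfolding D'_def by (rule expand[OF sqNL])
    then show "A a (tpart L m) * F (nn a) (N div L) = (\<Sum>L'\<in>D'. infsum (g L' a) {b. tdvd_inf b L'})"
      unfolding g_def by (simp add: sum_distrib_left infsum_cmult_right')
  qed
  also have "\<dots> = (\<Sum>L'\<in>D'. infsum (\<lambda>a. infsum (g L' a) {b. tdvd_inf b L'}) {a. tdvd_inf a L})"
    by (rule infsum_finsum(1)[OF finD']) (use inner in blast)
  also have "\<dots> = (\<Sum>L'\<in>D'. TT (L*L'))" using inner by (intro sum.cong) auto
  finally show ?thesis unfolding nn_def D'_def .
qed

lemma TT_one: "TT 1 = G m N"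
proof -
  have t1: "tpart 1 m = (\<lambda>_. 1)" using Lpart_one m unfolding tpart_def pos_tuple_def by auto
  have "{c::'j\<Rightarrow>nat. tdvd_inf c 1} = {\<lambda>_. 1}" using tdvd_inf_one_eq by blast
  then have "TT 1 = hh 1 (\<lambda>_. 1)" unfolding TT_def by simp
  also have "\<dots> = G m N" unfolding hh_def t1 alpha_one A_one by simp
  finally show ?thesis .
qed

theorem main_result:
  "G m N = (\<Sum>L | L dvd N. of_int (mu L) *
           infsum (\<lambda>a. A a (tpart L m) * F (\<lambda>i. \<alpha> a (tpart L m) i * (m i div tpart L m i)) (N div L))
             {a. tdvd_inf a L})"
proof -
  define D where "D = {L. L dvd N}"
  have finD: "finite D" unfolding D_def using N0 by simp
  have re: "(\<Sum>L' | L' dvd N div L. TT (L*L')) = (\<Sum>K\<in>{K. K \<in> D \<and> L dvd K}. TT K)"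
    if L: "L \<in> D" for L
  proof -
    have L0: "0 < L" using L N0 unfolding D_def by (cases "L = 0") auto
    show ?thesis
    proof (rule sum.reindex_bij_witness[where i="\<lambda>K. K div L" and j="\<lambda>L'. L * L'"])
      fix L' assume "L' \<in> {L'. L' dvd N div L}"
      then have d: "L * L' dvd L * (N div L)" by simp
      have "L * (N div L) = N" using L unfolding D_def by simp
      then show "L * L' \<in> {K. K \<in> D \<and> L dvd K}" using d unfolding D_def by simp
      show "L * L' div L = L'" using L0 by simp
      show "TT (L * L') = TT (L * L')" ..
    next
      fix K assume K: "K \<in> {K. K \<in> D \<and> L dvd K}"
      then show "L * (K div L) = K" by simp
      have "K div L dvd N div L" using K L unfolding D_def by (simp add: div_dvd_div)
      then show "K div L \<in> {L'. L' dvd N div L}" by simp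
    qed
  qed
  have "(\<Sum>L | L dvd N. of_int (mu L) *
           infsum (\<lambda>a. A a (tpart L m) * F (\<lambda>i. \<alpha> a (tpart L m) i * (m i div tpart L m i)) (N div L))
             {a. tdvd_inf a L}) = (\<Sum>L\<in>D. of_int (mu L) * (\<Sum>K\<in>{K. K \<in> D \<and> L dvd K}. TT K))"
    unfolding D_def using step re unfolding D_def by (intro sum.cong) auto
  also have "\<dots> = (\<Sum>L\<in>D. \<Sum>K\<in>{K. K \<in> D \<and> L dvd K}. of_int (mu L) * TT K)"
    by (simp add: sum_distrib_left)
  also have "\<dots> = (\<Sum>K\<in>D. \<Sum>L\<in>{L. L \<in> D \<and> L dvd K}. of_int (mu L) * TT K)"
    by (rule sum.swap_restrict[OF finD finD])
  also have "\<dots> = (\<Sum>K\<in>D. (if K = 1 then TT K else 0))"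
  proof (rule sum.cong[OF refl])
    fix K assume K: "K \<in> D"
    have set: "{L. L \<in> D \<and> L dvd K} = {L. L dvd K}" using K unfolding D_def by (auto intro: dvd_trans)
    have sq: "squarefree K" using K N squarefree_mono unfolding D_def by blast
    have "(\<Sum>L\<in>{L. L \<in> D \<and> L dvd K}. of_int (mu L) * TT K) = of_int (\<Sum>L | L dvd K. mu L) * TT K"
      unfolding set by (simp add: sum_distrib_right)
    also have "\<dots> = (if K = 1 then TT K else 0)" unfolding mu_sum[OF sq] by simp
    finally show "(\<Sum>L\<in>{L. L \<in> D \<and> L dvd K}. of_int (mu L) * TT K) = (if K = 1 then TT K else 0)" .
  qed
  also have "\<dots> = TT 1" using finD unfolding D_def by simp
  finally show ?thesis using TT_one by simp
qed

end


theorem lemma4p1: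
  fixes F G :: "('d::finite \<Rightarrow> nat) \<Rightarrow> nat \<Rightarrow> complex"
    and A :: "('j::finite \<Rightarrow> nat) \<Rightarrow> ('d \<Rightarrow> nat) \<Rightarrow> complex"
    and \<alpha> :: "('j \<Rightarrow> nat) \<Rightarrow> ('d \<Rightarrow> nat) \<Rightarrow> ('d \<Rightarrow> nat)"
  assumes alpha_pos: "\<And>a m. pos_tuple a \<Longrightarrow> pos_tuple m \<Longrightarrow> pos_tuple (\<alpha> a m)"
    and A_one: "A (\<lambda>_. 1) (\<lambda>_. 1) = 1"
    and A_mult: "\<And>a m a' m' L1 L2. 0 < L1 \<Longrightarrow> 0 < L2 \<Longrightarrow> coprime L1 L2 \<Longrightarrow>
         tdvd_inf a L1 \<Longrightarrow> tdvd_inf m L1 \<Longrightarrow> tdvd_inf a' L2 \<Longrightarrow> tdvd_inf m' L2 \<Longrightarrow>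
         A (\<lambda>j. a j * a' j) (\<lambda>i. m i * m' i) = A a m * A a' m'"
    and alpha_mult: "\<And>a m a' m' L1 L2. 0 < L1 \<Longrightarrow> 0 < L2 \<Longrightarrow> coprime L1 L2 \<Longrightarrow>
         tdvd_inf a L1 \<Longrightarrow> tdvd_inf m L1 \<Longrightarrow> tdvd_inf a' L2 \<Longrightarrow> tdvd_inf m' L2 \<Longrightarrow>
         \<alpha> (\<lambda>j. a j * a' j) (\<lambda>i. m i * m' i) = (\<lambda>i. \<alpha> a m i * \<alpha> a' m' i)"
    and alpha_local: "\<And>p a m. prime p \<Longrightarrow> all_powers_of p a \<Longrightarrow> all_powers_of p m \<Longrightarrow>
         all_powers_of p (\<alpha> a m)"
    and conv: "\<And>N m L. squarefree N \<Longrightarrow> pos_tuple m \<Longrightarrow> L dvd N \<Longrightarrow>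
         (\<lambda>a. norm (A a (tpart L m) * G (\<lambda>i. \<alpha> a (tpart L m) i * (m i div tpart L m i)) (N div L)))
           summable_on {a. tdvd_inf a L}"
    and expand: "\<And>N m. squarefree N \<Longrightarrow> pos_tuple m \<Longrightarrow>
         F m N = (\<Sum>L | L dvd N.
           infsum (\<lambda>a. A a (tpart L m) * G (\<lambda>i. \<alpha> a (tpart L m) i * (m i div tpart L m i)) (N div L))
             {a. tdvd_inf a L})"
    and N: "squarefree N"
    and m: "pos_tuple m"
  shows "G m N = (\<Sum>L | L dvd N. of_int (mu L) *
           infsum (\<lambda>a. A a (tpart L m) * F (\<lambda>i. \<alpha> a (tpart L m) i * (m i div tpart L m i)) (N div L))
             {a. tdvd_inf a L})"
proof -
  interpret main \<alpha> F G A N m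
    by unfold_locales (fact assms)+
  show ?thesis by (rule main_result)
qed

end
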